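(* If $(G,\sigma)$ is a signed graph and $(F,\pi)$ is a signed forest with at least one edge, then $\chi_s((G,\sigma)\,\square\,(F,\pi))=\chi_s((G,\sigma)\,\square\,K_2^+)$. In particular, for all integers $n,m\ge 2$ and all signatures $\sigma_1$ of $P_n$ and $\sigma_2$ of $P_m$, $\chi_s((P_n,\sigma_1)\,\square\,(P_m,\sigma_2))=2$.
   Context: A signed graph $(G,\sigma)$ is a simple loopless undirected graph $G$ with a signature $\sigma:E(G)\to\{+1,-1\}$. Switching a vertex $v$ negates the sign of every edge incident to $v$; two signatures are equivalent if one is obtained from the other by switching a set of vertices. A homomorphism of $(G,\sigma)$ to $(H,\pi)$ is a graph homomorphism $\varphi:G\to H$ for which there is a signature $\sigma'$ equivalent to $\sigma$ with $\pi(\varphi(u)\varphi(v))=\sigma'(uv)$ for every edge $uv$ of $G$. $\chi_s(G,\sigma)$ is the smallest order of a signed graph to which $(G,\sigma)$ admits a homomorphism. The Cartesian product $(G,\sigma)\,\square\,(H,\pi)$ has vertex set $V(G)\times V(H)$, and $(u_1,v_1)(u_2,v_2)$ is an edge of sign $s$ iff either $u_1=u_2$ and $v_1v_2\in E(H)$ with $\pi(v_1v_2)=s$, or $v_1=v_2$ and $u_1u_2\in E(G)$ with $\sigma(u_1u_2)=s$. $K_2^+$ is a single positive edge; $P_n$ is the path on $n$ vertices. *)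

theory Defs
  imports Main
begin

text \<open>A signed graph: finite vertex set, a set of edges (2-element subsets of the
vertex set) and a signature taking values +1 / -1 on edges (values on non-edges
are irrelevant).\<close>

record 'a sgraph =
  verts :: "'a set"
  edges :: "'a set set"
  sgn   :: "'a set \<Rightarrow> int"

definition signed_graph :: "('a, 'z) sgraph_scheme \<Rightarrow> bool" where
  "signed_graph G \<longleftrightarrow> finite (verts G) \<and>
     (\<forall>e\<in>edges G. \<exists>u v. e = {u, v} \<and> u \<noteq> v \<and> u \<in> verts G \<and> v \<in> verts G) \<and>
     (\<forall>e\<in>edges G. sgn G e = 1 \<or> sgn G e = -1)"

text \<open>Switching the vertices of a set X: an edge changes sign iff exactly one
of its endpoints lies in X.\<close>
definition switch :: "'a set \<Rightarrow> ('a set \<Rightarrow> int) \<Rightarrow> 'a set \<Rightarrow> int" where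
  "switch X s e = (if odd (card (e \<inter> X)) then - s e else s e)"

text \<open>Signed graph homomorphism: a graph homomorphism phi together with an
equivalent signature (obtained by switching a set X of vertices) under which
edge signs are preserved.\<close>
definition signed_hom :: "('a \<Rightarrow> 'b) \<Rightarrow> 'a sgraph \<Rightarrow> 'b sgraph \<Rightarrow> bool" where
  "signed_hom \<phi> G H \<longleftrightarrow> (\<forall>v\<in>verts G. \<phi> v \<in> verts H) \<and>
     (\<exists>X\<subseteq>verts G. \<forall>e\<in>edges G. \<phi> ` e \<in> edges H \<and>
          sgn H (\<phi> ` e) = switch X (sgn G) e)"

text \<open>Signed chromatic number: least order of a signed graph to which G maps.
Every finite signed graph is isomorphic to one on vertex set {0..<k}.\<close>
definition chi_s :: "'a sgraph \<Rightarrow> nat" where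
  "chi_s G = (LEAST k. \<exists>(H :: nat sgraph) \<phi>. signed_graph H \<and> verts H = {..<k} \<and>
                         signed_hom \<phi> G H)"

definition cprod :: "'a sgraph \<Rightarrow> 'b sgraph \<Rightarrow> ('a \<times> 'b) sgraph" where
  "cprod G H = \<lparr> verts = verts G \<times> verts H,
     edges = {{(u, v1), (u, v2)} | u v1 v2. u \<in> verts G \<and> {v1, v2} \<in> edges H}
           \<union> {{(u1, v), (u2, v)} | u1 u2 v. v \<in> verts H \<and> {u1, u2} \<in> edges G},
     sgn = (\<lambda>e. if card (fst ` e) = 1 then sgn H (snd ` e) else sgn G (fst ` e)) \<rparr>"

definition has_cycle :: "'a sgraph \<Rightarrow> bool" where
  "has_cycle G \<longleftrightarrow> (\<exists>xs. length xs \<ge> 3 \<and> distinct xs \<and> set xs \<subseteq> verts G \<and>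
      (\<forall>i. Suc i < length xs \<longrightarrow> {xs ! i, xs ! Suc i} \<in> edges G) \<and>
      {last xs, hd xs} \<in> edges G)"

definition signed_forest :: "'a sgraph \<Rightarrow> bool" where
  "signed_forest F \<longleftrightarrow> signed_graph F \<and> \<not> has_cycle F"

definition K2plus :: "nat sgraph" where
  "K2plus = \<lparr> verts = {0, 1}, edges = {{0, 1}}, sgn = (\<lambda>_. 1) \<rparr>"

definition path_sg :: "nat \<Rightarrow> (nat set \<Rightarrow> int) \<Rightarrow> nat sgraph" where
  "path_sg n s = \<lparr> verts = {..<n}, edges = {{i, Suc i} | i. Suc i < n}, sgn = s \<rparr>"

end

theory Submission
  imports Defs
begin


lemma sg_edge: "signed_graph F \<Longrightarrow> {a,b} \<in> edges F \<Longrightarrow> a \<noteq> b \<and> a \<in> verts F \<and> b \<in> verts F"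
  unfolding signed_graph_def by (smt (verit) doubleton_eq_iff)

lemma sg_sgn: "signed_graph F \<Longrightarrow> e \<in> edges F \<Longrightarrow> sgn F e = 1 \<or> sgn F e = -1"
  unfolding signed_graph_def by blast

lemma switch2: "a \<noteq> b \<Longrightarrow> switch X s {a,b} = s {a,b} * (if a \<in> X then -1 else 1) * (if b \<in> X then -1 else 1)"
  unfolding switch_def
  by (cases "a \<in> X"; cases "b \<in> X") (auto simp: Int_insert_left)

lemma cprod_edges: "e \<in> edges (cprod G H) \<longleftrightarrow>
  (\<exists>u v1 v2. e = {(u,v1),(u,v2)} \<and> u \<in> verts G \<and> {v1,v2} \<in> edges H) \<or>
  (\<exists>u1 u2 v. e = {(u1,v),(u2,v)} \<and> v \<in> verts H \<and> {u1,u2} \<in> edges G)"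
  by (auto simp: cprod_def)

lemma cprod_verts: "verts (cprod G H) = verts G \<times> verts H"
  by (simp add: cprod_def)

lemma cprod_sgn1: "v1 \<noteq> v2 \<Longrightarrow> sgn (cprod G H) {(u,v1),(u,v2)} = sgn H {v1,v2}"
  by (simp add: cprod_def)

lemma cprod_sgn2: "u1 \<noteq> u2 \<Longrightarrow> sgn (cprod G H) {(u1,v),(u2,v)} = sgn G {u1,u2}"
  by (simp add: cprod_def)

lemma cprod_sg: "signed_graph G \<Longrightarrow> signed_graph H \<Longrightarrow> signed_graph (cprod G H)"
proof -
  assume g: "signed_graph G" and h: "signed_graph H"
  have f: "finite (verts (cprod G H))" using g h by (simp add: cprod_verts signed_graph_def)
  have "\<exists>u v. e = {u, v} \<and> u \<noteq> v \<and> u \<in> verts (cprod G H) \<and> v \<in> verts (cprod G H)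
     \<and> (sgn (cprod G H) e = 1 \<or> sgn (cprod G H) e = -1)" if "e \<in> edges (cprod G H)" for e
    using that unfolding cprod_edges
  proof
    assume "\<exists>u v1 v2. e = {(u,v1),(u,v2)} \<and> u \<in> verts G \<and> {v1,v2} \<in> edges H"
    then obtain u v1 v2 where "e = {(u,v1),(u,v2)}" "u \<in> verts G" "{v1,v2} \<in> edges H" by blast
    moreover have "v1 \<noteq> v2" "v1 \<in> verts H" "v2 \<in> verts H" using sg_edge[OF h] \<open>{v1,v2} \<in> edges H\<close> by auto
    moreover have "sgn H {v1,v2} = 1 \<or> sgn H {v1,v2} = -1" using sg_sgn[OF h] \<open>{v1,v2} \<in> edges H\<close> by auto
    ultimately show ?thesis using cprod_sgn1[of v1 v2 G H u] by (auto simp: cprod_verts)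
  next
    assume "\<exists>u1 u2 v. e = {(u1,v),(u2,v)} \<and> v \<in> verts H \<and> {u1,u2} \<in> edges G"
    then obtain u1 u2 v where "e = {(u1,v),(u2,v)}" "v \<in> verts H" "{u1,u2} \<in> edges G" by blast
    moreover have "u1 \<noteq> u2" "u1 \<in> verts G" "u2 \<in> verts G" using sg_edge[OF g] \<open>{u1,u2} \<in> edges G\<close> by auto
    moreover have "sgn G {u1,u2} = 1 \<or> sgn G {u1,u2} = -1" using sg_sgn[OF g] \<open>{u1,u2} \<in> edges G\<close> by auto
    ultimately show ?thesis using cprod_sgn2[of u1 u2 G H v] by (auto simp: cprod_verts)
  qed
  then show ?thesis using f unfolding signed_graph_def by blast
qed

lemma hom_comp:
  assumes a: "signed_graph A" and b: "signed_graph B"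
    and f: "signed_hom \<phi> A B" and g: "signed_hom \<psi> B C"
  shows "signed_hom (\<psi> \<circ> \<phi>) A C"
proof -
  obtain X where X: "X \<subseteq> verts A" "\<forall>e\<in>edges A. \<phi> ` e \<in> edges B \<and> sgn B (\<phi> ` e) = switch X (sgn A) e"
    using f unfolding signed_hom_def by blast
  obtain Y where Y: "Y \<subseteq> verts B" "\<forall>e\<in>edges B. \<psi> ` e \<in> edges C \<and> sgn C (\<psi> ` e) = switch Y (sgn B) e"
    using g unfolding signed_hom_def by blast
  define Z where "Z = {x \<in> verts A. (x \<in> X) \<noteq> (\<phi> x \<in> Y)}"
  have "(\<psi> \<circ> \<phi>) ` e \<in> edges C \<and> sgn C ((\<psi> \<circ> \<phi>) ` e) = switch Z (sgn A) e" if e: "e \<in> edges A" for e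
  proof -
    obtain u v where uv: "e = {u,v}" "u \<noteq> v" "u \<in> verts A" "v \<in> verts A"
      using a e unfolding signed_graph_def by blast
    have pe: "\<phi> ` e = {\<phi> u, \<phi> v}" using uv by auto
    have pe2: "{\<phi> u, \<phi> v} \<in> edges B" using X e pe by auto
    have ne: "\<phi> u \<noteq> \<phi> v" using sg_edge[OF b pe2] by blast
    have "(\<psi> \<circ> \<phi>) ` e = \<psi> ` {\<phi> u, \<phi> v}" using uv by auto
    moreover have "\<psi> ` {\<phi> u, \<phi> v} \<in> edges C" using Y pe2 by blast
    moreover have "sgn C (\<psi> ` {\<phi> u, \<phi> v}) = switch Y (sgn B) {\<phi> u, \<phi> v}" using Y pe2 by blast
    moreover have "sgn B {\<phi> u, \<phi> v} = switch X (sgn A) e" using X e pe by auto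
    ultimately show ?thesis using uv ne
      by (simp add: switch2 Z_def)
  qed
  moreover have "\<forall>v\<in>verts A. (\<psi> \<circ> \<phi>) v \<in> verts C" using f g unfolding signed_hom_def by auto
  moreover have "Z \<subseteq> verts A" unfolding Z_def by blast
  ultimately show ?thesis unfolding signed_hom_def by blast
qed

lemma chi_eq:
  assumes "signed_graph A" "signed_graph B" "signed_hom \<phi> A B" "signed_hom \<psi> B A"
  shows "chi_s A = chi_s B"
proof -
  have "(\<lambda>k. \<exists>(H :: nat sgraph) \<phi>. signed_graph H \<and> verts H = {..<k} \<and> signed_hom \<phi> A H)
      = (\<lambda>k. \<exists>(H :: nat sgraph) \<phi>. signed_graph H \<and> verts H = {..<k} \<and> signed_hom \<phi> B H)"
  proof (intro ext iffI)
    fix k assume "\<exists>(H :: nat sgraph) \<phi>. signed_graph H \<and> verts H = {..<k} \<and> signed_hom \<phi> A H"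
    then obtain H \<phi>' where "signed_graph H" "verts H = {..<k}" "signed_hom \<phi>' A H" by blast
    then show "\<exists>(H :: nat sgraph) \<phi>. signed_graph H \<and> verts H = {..<k} \<and> signed_hom \<phi> B H"
      using hom_comp[OF assms(2,1,4)] by blast
  next
    fix k assume "\<exists>(H :: nat sgraph) \<phi>. signed_graph H \<and> verts H = {..<k} \<and> signed_hom \<phi> B H"
    then obtain H \<phi>' where "signed_graph H" "verts H = {..<k}" "signed_hom \<phi>' B H" by blast
    then show "\<exists>(H :: nat sgraph) \<phi>. signed_graph H \<and> verts H = {..<k} \<and> signed_hom \<phi> A H"
      using hom_comp[OF assms(1,2,3)] by blast
  qed
  then show ?thesis unfolding chi_s_def by simp
qed



definition ispath :: "'a sgraph \<Rightarrow> 'a list \<Rightarrow> bool" where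
  "ispath F xs \<longleftrightarrow> distinct xs \<and> set xs \<subseteq> verts F \<and>
     (\<forall>i. Suc i < length xs \<longrightarrow> {xs ! i, xs ! Suc i} \<in> edges F)"

lemma leaf:
  assumes sg: "signed_graph F" and nc: "\<not> has_cycle F" and e: "e \<in> edges F"
  shows "\<exists>v u. {v,u} \<in> edges F \<and> (\<forall>e'\<in>edges F. v \<in> e' \<longrightarrow> e' = {v,u})"
proof -
  obtain a b where ab: "e = {a,b}" "a \<noteq> b" "a \<in> verts F" "b \<in> verts F"
    using sg e unfolding signed_graph_def by blast
  define P where "P xs \<longleftrightarrow> ispath F xs \<and> length xs \<ge> 2" for xs
  have P0: "P [a,b]" unfolding P_def ispath_def using ab e
    by (auto simp: less_Suc_eq)
  have bnd: "length xs < card (verts F) + 1" if "P xs" for xs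
  proof -
    have "length xs = card (set xs)" using that distinct_card unfolding P_def ispath_def by metis
    also have "\<dots> \<le> card (verts F)" using that sg unfolding P_def ispath_def signed_graph_def
      by (meson card_mono)
    finally show ?thesis by simp
  qed
  obtain xs where xs: "P xs" "\<forall>y. P y \<longrightarrow> length y \<le> length xs"
    using ex_has_greatest_nat[of P "[a,b]" length, OF P0] bnd by blast
  have len: "length xs \<ge> 2" and dist: "distinct xs" and sub: "set xs \<subseteq> verts F"
    and ed: "\<forall>i. Suc i < length xs \<longrightarrow> {xs ! i, xs ! Suc i} \<in> edges F"
    using xs(1) unfolding P_def ispath_def by auto
  define v u where "v = xs ! 0" and "u = xs ! 1"
  have vu: "{v,u} \<in> edges F" using ed len unfolding v_def u_def by auto
  have "e' = {v,u}" if e': "e' \<in> edges F" "v \<in> e'" for e'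
  proof (rule ccontr)
    assume ne: "e' \<noteq> {v,u}"
    obtain x y where xy: "e' = {x,y}" "x \<noteq> y" "x \<in> verts F" "y \<in> verts F"
      using sg e' unfolding signed_graph_def by blast
    obtain w where w: "e' = {v,w}" "w \<noteq> v" "w \<in> verts F" using xy e'(2) by auto
    have wu: "w \<noteq> u" using ne w by auto
    show False
    proof (cases "w \<in> set xs")
      case False
      have "P (w # xs)" unfolding P_def ispath_def
      proof (intro conjI allI impI)
        show "distinct (w # xs)" using False dist by simp
        show "set (w # xs) \<subseteq> verts F" using sub w by simp
        show "2 \<le> length (w # xs)" using len by simp
        fix i assume i: "Suc i < length (w # xs)"
        show "{(w # xs) ! i, (w # xs) ! Suc i} \<in> edges F"
        proof (cases i)
          case 0 then show ?thesis using w e' unfolding v_def by (simp add: insert_commute)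
        next
          case (Suc j) then show ?thesis using ed i by simp
        qed
      qed
      then show False using xs(2) by fastforce
    next
      case True
      then obtain j where j: "j < length xs" "xs ! j = w" by (meson in_set_conv_nth)
      have j2: "j \<ge> 2" using j w wu unfolding v_def u_def
        by (metis One_nat_def less_2_cases not_le)
      define ys where "ys = take (Suc j) xs"
      have "has_cycle F" unfolding has_cycle_def
      proof (intro exI conjI allI impI)
        show "3 \<le> length ys" using j j2 unfolding ys_def by simp
        show "distinct ys" using dist unfolding ys_def by simp
        show "set ys \<subseteq> verts F" using sub set_take_subset unfolding ys_def by fastforce
        fix i assume "Suc i < length ys"
        then show "{ys ! i, ys ! Suc i} \<in> edges F" using ed j unfolding ys_def by simp
      next
        have "last ys = w" using j unfolding ys_def by (simp add: take_Suc_conv_app_nth)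
        moreover have "hd ys = v" using j len unfolding ys_def v_def by (cases xs) auto
        ultimately show "{last ys, hd ys} \<in> edges F" using w e' by (simp add: insert_commute)
      qed
      then show False using nc by simp
    qed
  qed
  then show ?thesis using vu by blast
qed

lemma label:
  assumes "signed_graph F" "\<not> has_cycle F"
  shows "\<exists>l::_\<Rightarrow>bool. \<forall>u v. {u,v} \<in> edges F \<longrightarrow> (l u \<noteq> l v) = w {u,v}"
  using assms
proof (induction "card (edges F)" arbitrary: F rule: less_induct)
  case less
  show ?case
  proof (cases "edges F = {}")
    case True then show ?thesis by simp
  next
    case False
    then obtain e where e: "e \<in> edges F" by blast
    obtain v u where vu: "{v,u} \<in> edges F" "\<forall>e'\<in>edges F. v \<in> e' \<longrightarrow> e' = {v,u}"
      using leaf[OF less.prems e] by blast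
    have uv: "v \<noteq> u" using sg_edge[OF less.prems(1) vu(1)] by (elim conjE)
    define F' where "F' = F\<lparr>edges := edges F - {{v,u}}\<rparr>"
    have fin: "finite (edges F)"
    proof -
      have "edges F \<subseteq> Pow (verts F)"
      proof
        fix e assume "e \<in> edges F"
        then obtain a b where "e = {a,b}" "a \<in> verts F" "b \<in> verts F"
          using less.prems(1) unfolding signed_graph_def by meson
        then show "e \<in> Pow (verts F)" by simp
      qed
      moreover have "finite (verts F)" using less.prems(1) unfolding signed_graph_def by blast
      ultimately show ?thesis by (meson finite_Pow_iff finite_subset)
    qed
    have c: "card (edges F') < card (edges F)"
    proof -
      have "edges F' = edges F - {{v,u}}" unfolding F'_def by simp
      then show ?thesis using card_Diff1_less[OF fin vu(1)] by (simp only:)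
    qed
    have ve: "verts F' = verts F" "edges F' \<subseteq> edges F" "sgn F' = sgn F" unfolding F'_def by auto
    have s: "signed_graph F'" using less.prems(1) ve unfolding signed_graph_def by (metis subsetD)
    have h: "\<not> has_cycle F'" using less.prems(2) ve unfolding has_cycle_def by (metis subsetD)
    obtain l :: "_ \<Rightarrow> bool" where l: "\<forall>x y. {x,y} \<in> edges F' \<longrightarrow> (l x \<noteq> l y) = w {x,y}"
      using less.hyps[OF c s h] by blast
    define l' where "l' = l(v := (l u \<noteq> w {v,u}))"
    have "(l' x \<noteq> l' y) = w {x,y}" if xy: "{x,y} \<in> edges F" for x y
    proof (cases "{x,y} = {v,u}")
      case True
      have lv: "(l' v \<noteq> l' u) = w {v,u}" using uv unfolding l'_def by (cases "l u"; cases "w {v,u}") auto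
      have "(x = v \<and> y = u) \<or> (x = u \<and> y = v)" using True by (meson doubleton_eq_iff)
      then show ?thesis
      proof
        assume "x = v \<and> y = u" then show ?thesis using lv by simp
      next
        assume "x = u \<and> y = v" then show ?thesis using lv True by (metis)
      qed
    next
      case False
      then have "v \<noteq> x" "v \<noteq> y" using vu(2) xy by auto
      moreover have "{x,y} \<in> edges F'" using xy False unfolding F'_def by simp
      ultimately show ?thesis using l unfolding l'_def by simp
    qed
    then show ?thesis by blast
  qed
qed



lemma two_set: "a < 2 \<Longrightarrow> b < 2 \<Longrightarrow> a \<noteq> b \<Longrightarrow> {a,b} = {0, 1::nat}"
  by (auto simp: less_2_cases_iff)

lemma K2_verts: "verts K2plus = {0,1}" and K2_edges: "edges K2plus = {{0,1}}"
  and K2_sgn: "sgn K2plus e = 1"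
  by (simp_all add: K2plus_def)

lemma K2_sg: "signed_graph K2plus"
  unfolding signed_graph_def K2_verts K2_edges K2_sgn by auto

lemma hom_F_K2:
  fixes G :: "'a sgraph" and F :: "'b sgraph"
  assumes g: "signed_graph G" and f: "signed_forest F"
  shows "\<exists>\<phi>. signed_hom \<phi> (cprod G F) (cprod G K2plus)"
proof -
  have sf: "signed_graph F" and nc: "\<not> has_cycle F" using f unfolding signed_forest_def by auto
  obtain c :: "_ \<Rightarrow> bool" where c: "\<forall>u v. {u,v} \<in> edges F \<longrightarrow> (c u \<noteq> c v) = True"
    using label[OF sf nc, of "\<lambda>_. True"] by blast
  obtain s :: "_ \<Rightarrow> bool" where s: "\<forall>u v. {u,v} \<in> edges F \<longrightarrow> (s u \<noteq> s v) = (sgn F {u,v} = -1)"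
    using label[OF sf nc, of "\<lambda>e. sgn F e = -1"] by blast
  define \<phi> where "\<phi> = (\<lambda>(x::'a,y::'b). (x, if c y then 1 else 0::nat))"
  define X where "X = {p \<in> verts (cprod G F). s (snd p)}"
  have Xm: "p \<in> verts (cprod G F) \<Longrightarrow> (p \<in> X) = s (snd p)" for p unfolding X_def by simp
  have V: "\<phi> p \<in> verts (cprod G K2plus)" if "p \<in> verts (cprod G F)" for p
      using that unfolding \<phi>_def cprod_verts K2_verts by (cases p) (auto split: if_splits)
  have Xs: "X \<subseteq> verts (cprod G F)" unfolding X_def by blast
  have E: "\<phi> ` e \<in> edges (cprod G K2plus) \<and> sgn (cprod G K2plus) (\<phi> ` e) = switch X (sgn (cprod G F)) e" if "e \<in> edges (cprod G F)" for e
  proof -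
    from that have "e \<in> edges (cprod G F)" .
    then consider (a) u v1 v2 where "e = {(u,v1),(u,v2)}" "u \<in> verts G" "{v1,v2} \<in> edges F"
      | (b) u1 u2 v where "e = {(u1,v),(u2,v)}" "v \<in> verts F" "{u1,u2} \<in> edges G"
      unfolding cprod_edges by blast
    then show "\<phi> ` e \<in> edges (cprod G K2plus) \<and> sgn (cprod G K2plus) (\<phi> ` e) = switch X (sgn (cprod G F)) e"
    proof cases
      case a
      have v12: "v1 \<noteq> v2" "v1 \<in> verts F" "v2 \<in> verts F" using sg_edge[OF sf a(3)] by auto
      have cc: "c v1 \<noteq> c v2" using c a(3) by blast
      define C1 C2 where "C1 = (if c v1 then 1 else 0::nat)" and "C2 = (if c v2 then 1 else 0::nat)"
      have img: "\<phi> ` e = {(u,C1),(u,C2)}" unfolding a(1) \<phi>_def C1_def C2_def by simp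
      have C12: "C1 \<noteq> C2" "{C1,C2} = {0,1}" using cc unfolding C1_def C2_def by (auto intro: two_set)
      have ed: "\<phi> ` e \<in> edges (cprod G K2plus)" unfolding img cprod_edges K2_edges using a(2) C12 by blast
      have sg1: "sgn (cprod G K2plus) (\<phi> ` e) = 1" unfolding img cprod_sgn1[OF C12(1)] K2_sgn ..
      have ss: "(s v1 \<noteq> s v2) = (sgn F {v1,v2} = -1)" using s a(3) by blast
      have pm: "sgn F {v1,v2} = 1 \<or> sgn F {v1,v2} = -1" using sg_sgn[OF sf a(3)] .
      have m1: "((u,v1) \<in> X) = s v1" "((u,v2) \<in> X) = s v2"
        using Xm a(2) v12 by (auto simp: cprod_verts)
      have "switch X (sgn (cprod G F)) e = 1"
        unfolding a(1) using v12(1) m1 ss pm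
        by (auto simp: switch2 cprod_sgn1)
      then show ?thesis using ed sg1 by simp
    next
      case b
      have u12: "u1 \<noteq> u2" "u1 \<in> verts G" "u2 \<in> verts G" using sg_edge[OF g b(3)] by auto
      define C where "C = (if c v then 1 else 0::nat)"
      have img: "\<phi> ` e = {(u1,C),(u2,C)}" unfolding b(1) \<phi>_def C_def by simp
      have Cv: "C \<in> verts K2plus" unfolding C_def K2_verts by simp
      have ed: "\<phi> ` e \<in> edges (cprod G K2plus)" unfolding img cprod_edges using b(3) Cv by blast
      have m1: "((u1,v) \<in> X) = s v" "((u2,v) \<in> X) = s v"
        using Xm b(2) u12 by (auto simp: cprod_verts)
      have "switch X (sgn (cprod G F)) e = sgn G {u1,u2}"
        unfolding b(1) using u12(1) m1 by (auto simp: switch2 cprod_sgn2)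
      moreover have "sgn (cprod G K2plus) (\<phi> ` e) = sgn G {u1,u2}" unfolding img using cprod_sgn2[OF u12(1)] .
      ultimately show ?thesis using ed by simp
    qed
  qed
  show ?thesis unfolding signed_hom_def using V Xs E by blast
qed

lemma hom_K2_F:
  fixes G :: "'a sgraph" and F :: "'b sgraph"
  assumes g: "signed_graph G" and f: "signed_graph F" and ab: "{a,b} \<in> edges F"
  shows "\<exists>\<phi>. signed_hom \<phi> (cprod G K2plus) (cprod G F)"
proof -
  have abv: "a \<noteq> b" "a \<in> verts F" "b \<in> verts F" using sg_edge[OF f ab] by auto
  have pm: "sgn F {a,b} = 1 \<or> sgn F {a,b} = -1" using sg_sgn[OF f ab] .
  define \<phi> where "\<phi> = (\<lambda>(x::'a,i::nat). (x, if i = 0 then a else b))"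
  define X where "X = {p \<in> verts (cprod G K2plus). snd p = 1 \<and> sgn F {a,b} = -1}"
  have Xm: "p \<in> verts (cprod G K2plus) \<Longrightarrow> (p \<in> X) = (snd p = 1 \<and> sgn F {a,b} = -1)" for p
    unfolding X_def by simp
  have V: "\<phi> p \<in> verts (cprod G F)" if "p \<in> verts (cprod G K2plus)" for p
      using that abv unfolding \<phi>_def cprod_verts K2_verts by auto
  have Xs: "X \<subseteq> verts (cprod G K2plus)" unfolding X_def by blast
  have E: "\<phi> ` e \<in> edges (cprod G F) \<and> sgn (cprod G F) (\<phi> ` e) = switch X (sgn (cprod G K2plus)) e" if "e \<in> edges (cprod G K2plus)" for e
  proof -
    from that have "e \<in> edges (cprod G K2plus)" .
    then consider (a) u v1 v2 where "e = {(u,v1),(u,v2)}" "u \<in> verts G" "{v1,v2} \<in> edges K2plus"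
      | (b) u1 u2 v where "e = {(u1,v),(u2,v)}" "v \<in> verts K2plus" "{u1,u2} \<in> edges G"
      unfolding cprod_edges by blast
    then show "\<phi> ` e \<in> edges (cprod G F) \<and> sgn (cprod G F) (\<phi> ` e) = switch X (sgn (cprod G K2plus)) e"
    proof cases
      case a
      have "{v1,v2} = {0,1}" using a(3) unfolding K2_edges by simp
      then have e: "e = {(u,0),(u,1)}" unfolding a(1) by (auto simp: doubleton_eq_iff)
      have img: "\<phi> ` e = {(u,a),(u,b)}" unfolding e \<phi>_def by simp
      have ed: "\<phi> ` e \<in> edges (cprod G F)" unfolding img cprod_edges using a(2) ab by blast
      have sg1: "sgn (cprod G F) (\<phi> ` e) = sgn F {a,b}" unfolding img using cprod_sgn1[OF abv(1)] .
      have m1: "((u,0) \<in> X) = False" "((u,1) \<in> X) = (sgn F {a,b} = -1)"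
        using Xm a(2) by (auto simp: cprod_verts K2_verts)
      have "switch X (sgn (cprod G K2plus)) e = sgn F {a,b}"
        unfolding e using m1 pm by (auto simp: switch2 cprod_sgn1 K2_sgn)
      then show ?thesis using ed sg1 by simp
    next
      case b
      have u12: "u1 \<noteq> u2" "u1 \<in> verts G" "u2 \<in> verts G" using sg_edge[OF g b(3)] by auto
      define C where "C = (if v = 0 then a else b)"
      have img: "\<phi> ` e = {(u1,C),(u2,C)}" unfolding b(1) \<phi>_def C_def by simp
      have ed: "\<phi> ` e \<in> edges (cprod G F)" unfolding img cprod_edges using b(3) abv
        unfolding C_def by auto
      have m1: "((u1,v) \<in> X) = (v = 1 \<and> sgn F {a,b} = -1)" "((u2,v) \<in> X) = (v = 1 \<and> sgn F {a,b} = -1)"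
        using Xm b(2) u12 by (auto simp: cprod_verts)
      have "switch X (sgn (cprod G K2plus)) e = sgn G {u1,u2}"
        unfolding b(1) using u12(1) m1 by (auto simp: switch2 cprod_sgn2)
      moreover have "sgn (cprod G F) (\<phi> ` e) = sgn G {u1,u2}" unfolding img using cprod_sgn2[OF u12(1)] .
      ultimately show ?thesis using ed by simp
    qed
  qed
  show ?thesis unfolding signed_hom_def using V Xs E by blast
qed



primrec pot :: "(nat set \<Rightarrow> int) \<Rightarrow> nat \<Rightarrow> bool" where
  "pot s 0 = False"
| "pot s (Suc i) = (pot s i \<noteq> (s {i, Suc i} = -1))"

lemma path_edges: "e \<in> edges (path_sg n s) \<longleftrightarrow> (\<exists>i. e = {i, Suc i} \<and> Suc i < n)"
  by (auto simp: path_sg_def)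

lemma path_verts: "verts (path_sg n s) = {..<n}" and path_sgn: "sgn (path_sg n s) = s"
  by (simp_all add: path_sg_def)

lemma edge_ij: "{v1,v2} = {j, Suc j} \<Longrightarrow> {(u::nat,v1),(u,v2)} = {(u,j),(u,Suc j)}"
  by (auto simp: doubleton_eq_iff)

lemma edge_ij2: "{v1,v2} = {j, Suc j} \<Longrightarrow> {(v1,u::nat),(v2,u)} = {(j,u),(Suc j,u)}"
  by (auto simp: doubleton_eq_iff)

lemma par: "{(a + b) mod 2, (a + Suc b) mod 2} = {0, 1::nat}"
  by (rule two_set) (simp_all, presburger)

lemma par2: "{(a + b) mod 2, (Suc a + b) mod 2} = {0, 1::nat}"
  using par[of b a] by (simp add: add.commute)

lemma grid_hom:
  assumes s1: "signed_graph (path_sg n s1)" and s2: "signed_graph (path_sg m s2)"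
  shows "signed_hom (\<lambda>(i,j). (i + j) mod 2) (cprod (path_sg n s1) (path_sg m s2)) K2plus"
proof -
  let ?A = "cprod (path_sg n s1) (path_sg m s2)"
  define \<phi> :: "nat \<times> nat \<Rightarrow> nat" where "\<phi> = (\<lambda>(i,j). (i + j) mod 2)"
  define X where "X = {p \<in> verts ?A. pot s1 (fst p) \<noteq> pot s2 (snd p)}"
  have Xm: "p \<in> verts ?A \<Longrightarrow> (p \<in> X) = (pot s1 (fst p) \<noteq> pot s2 (snd p))" for p
    unfolding X_def by simp
  have V: "\<phi> p \<in> verts K2plus" for p unfolding \<phi>_def K2_verts by (cases p) auto
  have Xs: "X \<subseteq> verts ?A" unfolding X_def by blast
  have E: "\<phi> ` e \<in> edges K2plus \<and> sgn K2plus (\<phi> ` e) = switch X (sgn ?A) e" if "e \<in> edges ?A" for e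
  proof -
    from that consider (a) u v1 v2 where "e = {(u,v1),(u,v2)}" "u \<in> verts (path_sg n s1)" "{v1,v2} \<in> edges (path_sg m s2)"
      | (b) u1 u2 v where "e = {(u1,v),(u2,v)}" "v \<in> verts (path_sg m s2)" "{u1,u2} \<in> edges (path_sg n s1)"
      unfolding cprod_edges by blast
    then show ?thesis
    proof cases
      case a
      obtain j where j: "{v1,v2} = {j, Suc j}" "Suc j < m" using a(3) unfolding path_edges by blast
      have e: "e = {(u,j),(u,Suc j)}" using a(1) edge_ij[OF j(1)] by simp
      have img: "\<phi> ` e = {0,1}" unfolding e \<phi>_def using par[of u j] by simp
      have pm: "s2 {j, Suc j} = 1 \<or> s2 {j, Suc j} = -1"
        using sg_sgn[OF s2 a(3)] j(1) by (simp add: path_sgn)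
      have un: "u < n" using a(2) by (simp add: path_verts)
      have m1: "((u,j) \<in> X) = (pot s1 u \<noteq> pot s2 j)" "((u,Suc j) \<in> X) = (pot s1 u \<noteq> pot s2 (Suc j))"
        using Xm un j(2) by (auto simp: cprod_verts path_verts)
      have "switch X (sgn ?A) e = 1"
        unfolding e using m1 pm by (auto simp: switch2 cprod_sgn1 path_sgn)
      then show ?thesis using img by (simp add: K2_edges K2_sgn)
    next
      case b
      obtain j where j: "{u1,u2} = {j, Suc j}" "Suc j < n" using b(3) unfolding path_edges by blast
      have e: "e = {(j,v),(Suc j,v)}" using b(1) edge_ij2[OF j(1)] by simp
      have img: "\<phi> ` e = {0,1}" unfolding e \<phi>_def using par2[of j v] by simp
      have pm: "s1 {j, Suc j} = 1 \<or> s1 {j, Suc j} = -1"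
        using sg_sgn[OF s1 b(3)] j(1) by (simp add: path_sgn)
      have vm: "v < m" using b(2) by (simp add: path_verts)
      have m1: "((j,v) \<in> X) = (pot s1 j \<noteq> pot s2 v)" "((Suc j,v) \<in> X) = (pot s1 (Suc j) \<noteq> pot s2 v)"
        using Xm vm j(2) by (auto simp: cprod_verts path_verts)
      have "switch X (sgn ?A) e = 1"
        unfolding e using m1 pm by (auto simp: switch2 cprod_sgn2 path_sgn)
      then show ?thesis using img by (simp add: K2_edges K2_sgn)
    qed
  qed
  have "signed_hom \<phi> ?A K2plus" unfolding signed_hom_def using V Xs E by blast
  then show ?thesis unfolding \<phi>_def .
qed

lemma grid_chi:
  assumes "n \<ge> 2" "m \<ge> 2" and s1: "signed_graph (path_sg n s1)" and s2: "signed_graph (path_sg m s2)"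
  shows "chi_s (cprod (path_sg n s1) (path_sg m s2)) = 2"
  unfolding chi_s_def
proof (rule Least_equality)
  show "\<exists>(H :: nat sgraph) \<phi>. signed_graph H \<and> verts H = {..<2} \<and> signed_hom \<phi> (cprod (path_sg n s1) (path_sg m s2)) H"
  proof -
    have "verts K2plus = {..<2}" unfolding K2_verts by auto
    then show ?thesis using K2_sg grid_hom[OF s1 s2] by blast
  qed
next
  fix k assume "\<exists>(H :: nat sgraph) \<phi>. signed_graph H \<and> verts H = {..<k} \<and> signed_hom \<phi> (cprod (path_sg n s1) (path_sg m s2)) H"
  then obtain H :: "nat sgraph" and \<phi> where H: "signed_graph H" "verts H = {..<k}" "signed_hom \<phi> (cprod (path_sg n s1) (path_sg m s2)) H"
    by blast
  have e0: "{(0::nat,0::nat),(0,1)} \<in> edges (cprod (path_sg n s1) (path_sg m s2))"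
  proof -
    have "(0::nat) \<in> verts (path_sg n s1)" using assms(1) by (simp add: path_verts)
    moreover have "{0::nat, 1} \<in> edges (path_sg m s2)" unfolding path_edges using assms(2)
      by (intro exI[of _ 0]) simp
    ultimately show ?thesis unfolding cprod_edges by blast
  qed
  obtain X where "\<forall>e\<in>edges (cprod (path_sg n s1) (path_sg m s2)). \<phi> ` e \<in> edges H"
    using H(3) unfolding signed_hom_def by blast
  then have "\<phi> ` {(0::nat,0::nat),(0,1)} \<in> edges H" using e0 by blast
  then have "{\<phi> (0,0), \<phi> (0,1)} \<in> edges H" by simp
  then have "\<phi> (0,0) \<noteq> \<phi> (0,1)" "\<phi> (0,0) < k" "\<phi> (0,1) < k" using sg_edge[OF H(1)] H(2) by auto
  then show "2 \<le> k" by linarith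
qed

theorem corollary4p4:
  fixes G :: "'a sgraph" and F :: "'b sgraph"
  assumes "signed_graph G"
    and "signed_forest F"
    and "edges F \<noteq> {}"
  shows "chi_s (cprod G F) = chi_s (cprod G K2plus) \<and>
    (\<forall>n m s1 s2. n \<ge> 2 \<and> m \<ge> 2 \<and> signed_graph (path_sg n s1) \<and> signed_graph (path_sg m s2)
        \<longrightarrow> chi_s (cprod (path_sg n s1) (path_sg m s2)) = 2)"
proof
  have sf: "signed_graph F" using assms(2) unfolding signed_forest_def by blast
  obtain e where e: "e \<in> edges F" using assms(3) by blast
  obtain a b where ab: "e = {a,b}" using sf e unfolding signed_graph_def by blast
  obtain \<phi> where p1: "signed_hom \<phi> (cprod G F) (cprod G K2plus)" using hom_F_K2[OF assms(1,2)] by blast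
  obtain \<psi> where p2: "signed_hom \<psi> (cprod G K2plus) (cprod G F)" using hom_K2_F[OF assms(1) sf] e ab by blast
  show "chi_s (cprod G F) = chi_s (cprod G K2plus)"
    using chi_eq[OF cprod_sg[OF assms(1) sf] cprod_sg[OF assms(1) K2_sg] p1 p2] .
  show "\<forall>n m s1 s2. n \<ge> 2 \<and> m \<ge> 2 \<and> signed_graph (path_sg n s1) \<and> signed_graph (path_sg m s2)
        \<longrightarrow> chi_s (cprod (path_sg n s1) (path_sg m s2)) = 2"
    using grid_chi by blast
qed


end
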